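(* Let the state space be a compact metric space (metric $d$) with reference measure $\mu$, and let $a(x,x')$ be a transition density for which there exist a probability density $h$ and constants $0<c_a\le C_a<\infty$ with $c_ah(x)\le a(x',x)\le C_ah(x)$ for all $x,x'$, and $$\Delta(x',x):=\sup_{x''}\frac{|a(x,x'')-a(x',x'')|}{h(x'')}\to0\quad\text{as }d(x,x')\to0.$$ For a probability density $g$, let $X_1,\dots,X_N$ be i.i.d. from $g$. Then for every $\varepsilon>0$, $$\mathbf P\big[\|B(A^*E_N(g),b)-B(A^*g,b)\|_1>\varepsilon\big]\to0$$ exponentially fast in $N$, uniformly over all densities $g$ and all likelihoods $b\ge0$ with $0<\int h(x)b(x)\,d\mu(x)<\infty$.
   Context: $A^*f(x)=\int f(x')a(x',x)\,d\mu(x')$, extended to probability measures; $E_N(g)$ is the empirical distribution of $X_1,\dots,X_N$, so $A^*E_N(g)(x)=\frac1N\sum_ia(X_i,x)$. $B(f,b)(x)=f(x)b(x)/\int fb\,d\mu$ (Bayes operator). $\|\cdot\|_1$ is the $L_1(\mu)$ norm. *)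

theory Defs
  imports "HOL-Probability.Probability"
begin

definition Astar :: "'a measure \<Rightarrow> ('a \<Rightarrow> 'a \<Rightarrow> real) \<Rightarrow> ('a \<Rightarrow> real) \<Rightarrow> 'a \<Rightarrow> real" where
  "Astar \<mu> a f x = (\<integral>x'. f x' * a x' x \<partial>\<mu>)"

text \<open>A* applied to the empirical distribution of the sample X_0,...,X_{N-1}.\<close>
definition Astar_emp :: "('a \<Rightarrow> 'a \<Rightarrow> real) \<Rightarrow> nat \<Rightarrow> (nat \<Rightarrow> 'a) \<Rightarrow> 'a \<Rightarrow> real" where
  "Astar_emp a N X x = (1 / real N) * (\<Sum>i<N. a (X i) x)"

definition Bayes :: "'a measure \<Rightarrow> ('a \<Rightarrow> real) \<Rightarrow> ('a \<Rightarrow> real) \<Rightarrow> 'a \<Rightarrow> real" where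
  "Bayes \<mu> f b x = f x * b x / (\<integral>y. f y * b y \<partial>\<mu>)"

definition L1dist :: "'a measure \<Rightarrow> ('a \<Rightarrow> real) \<Rightarrow> ('a \<Rightarrow> real) \<Rightarrow> real" where
  "L1dist \<mu> f g = (\<integral>x. \<bar>f x - g x\<bar> \<partial>\<mu>)"

definition is_density :: "'a measure \<Rightarrow> ('a \<Rightarrow> real) \<Rightarrow> bool" where
  "is_density \<mu> f \<longleftrightarrow> f \<in> borel_measurable \<mu> \<and> (\<forall>x. 0 \<le> f x) \<and>
     integrable \<mu> f \<and> (\<integral>x. f x \<partial>\<mu>) = 1"

end

theory Submission imports Defs begin


lemma partition_exists:
  fixes \<delta> :: real
  assumes cpt: "compact (UNIV :: 'a::metric_space set)" and dpos: "\<delta> > 0"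
  shows "\<exists>(m::nat) (y::nat \<Rightarrow> 'a) C. 0 < m \<and> (\<forall>j<m. C j \<in> sets borel) \<and>
     (\<forall>x. \<exists>!j. j < m \<and> x \<in> C j) \<and> (\<forall>j<m. \<forall>x\<in>C j. dist (y j) x < \<delta>)"
proof -
  have "(UNIV::'a set) \<subseteq> (\<Union>c\<in>(UNIV::'a set). ball c \<delta>)" using dpos by auto
  then obtain F :: "'a set" where F: "finite F" "UNIV \<subseteq> (\<Union>c\<in>F. ball c \<delta>)"
    using compactE_image[OF cpt, of "UNIV::'a set" "\<lambda>c. ball c \<delta>"] by auto
  obtain ys where ys: "set ys = F" using finite_list[OF F(1)] by blast
  define m where "m = length ys"
  define y where "y = (\<lambda>j. ys ! j)"
  define C where "C = (\<lambda>j. ball (y j) \<delta> - (\<Union>k<j. ball (y k) \<delta>))"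
  have cov: "\<exists>j<m. x \<in> ball (y j) \<delta>" for x
  proof -
    obtain c where "c \<in> F" "x \<in> ball c \<delta>" using F(2) by blast
    then show ?thesis using ys unfolding m_def y_def by (metis in_set_conv_nth)
  qed
  have "0 < m" using cov[of undefined] by (elim exE) simp
  moreover have "\<forall>j<m. C j \<in> sets borel" unfolding C_def by auto
  moreover have "\<forall>x. \<exists>!j. j < m \<and> x \<in> C j"
  proof
    fix x
    define j0 where "j0 = (LEAST j. j < m \<and> x \<in> ball (y j) \<delta>)"
    have j0: "j0 < m \<and> x \<in> ball (y j0) \<delta>" unfolding j0_def using cov by (metis (mono_tags, lifting) LeastI)
    have nl: "\<not> (k < m \<and> x \<in> ball (y k) \<delta>)" if "k < j0" for k
      using not_less_Least[of k "\<lambda>j. j < m \<and> x \<in> ball (y j) \<delta>"] that unfolding j0_def by blast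
    have "x \<in> C j0" unfolding C_def using j0 nl by auto
    moreover have "j = j0" if "x \<in> C j" for j
    proof -
      have "\<not> j < j0" "\<not> j0 < j" using that \<open>x \<in> C j0\<close> unfolding C_def by auto
      then show ?thesis by simp
    qed
    ultimately show "\<exists>!j. j < m \<and> x \<in> C j" using j0 by blast
  qed
  moreover have "\<forall>j<m. \<forall>x\<in>C j. dist (y j) x < \<delta>" unfolding C_def by auto
  ultimately show ?thesis by blast
qed



lemma coord_hoeffding:
  assumes nu: "prob_space \<nu>" and A: "A \<in> sets \<nu>" and N: "N > 0" and t: "t \<ge> 0"
  shows "measure (PiM {..<N} (\<lambda>_. \<nu>)) {X \<in> space (PiM {..<N} (\<lambda>_. \<nu>)).
      real N * t \<le> \<bar>(\<Sum>i<N. indicator A (X i)) - real N * measure \<nu> A\<bar>} \<le> 2 * exp (-2 * t\<^sup>2 * real N)"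
proof -
  define P where "P = PiM {..<N} (\<lambda>_. \<nu>)"
  interpret P: prob_space P unfolding P_def by (rule prob_space_PiM) (simp add: nu)
  have comp: "distr P \<nu> (\<lambda>X. X i) = \<nu>" if "i < N" for i
    unfolding P_def by (rule distr_PiM_component) (use nu that in auto)
  have indc: "P.indep_vars (\<lambda>_. \<nu>) (\<lambda>i X. X i) {..<N}"
  proof (subst P.indep_vars_iff_distr_eq_PiM')
    show "{..<N} \<noteq> {}" using N by auto
    show "(\<lambda>X. X i) \<in> measurable P \<nu>" if "i \<in> {..<N}" for i
      unfolding P_def by (rule measurable_component_singleton) (use that in auto)
    have "distr P (PiM {..<N} (\<lambda>_. \<nu>)) (\<lambda>x. \<lambda>i\<in>{..<N}. x i) = distr P P (\<lambda>x. x)"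
      unfolding P_def by (rule distr_cong) (auto simp: space_PiM PiE_def extensional_restrict)
    also have "\<dots> = P" by simp
    also have "\<dots> = PiM {..<N} (\<lambda>i. distr P \<nu> (\<lambda>X. X i))"
      unfolding P_def by (rule PiM_cong) (auto simp: comp[unfolded P_def])
    finally show "distr P (PiM {..<N} (\<lambda>_. \<nu>)) (\<lambda>x. \<lambda>i\<in>{..<N}. x i) = PiM {..<N} (\<lambda>i. distr P \<nu> (\<lambda>X. X i))" .
  qed
  have ind: "P.indep_vars (\<lambda>_. borel) (\<lambda>i X. indicator A (X i) :: real) {..<N}"
    by (rule P.indep_vars_compose2[OF indc]) (use A in auto)
  have expc: "P.expectation (\<lambda>X. indicator A (X i) :: real) = measure \<nu> A" if "i < N" for i
  proof -
    have "P.expectation (\<lambda>X. indicator A (X i) :: real) = (\<integral>x. indicator A x \<partial>(distr P \<nu> (\<lambda>X. X i)))"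
    proof -
      have m: "(\<lambda>X. X i) \<in> measurable P \<nu>"
        unfolding P_def by (rule measurable_component_singleton) (use that in auto)
      have "(indicator A :: _ \<Rightarrow> real) \<in> borel_measurable \<nu>" using A by simp
      note ii = integral_distr[OF m this]
      from ii show ?thesis by (rule sym)
    qed
    then show ?thesis using comp[OF that] A by simp
  qed
  interpret H: Hoeffding_ineq P "{..<N}" "\<lambda>i X. indicator A (X i)" "\<lambda>_. 0" "\<lambda>_. 1"
     "\<Sum>i<N. P.expectation (\<lambda>X. indicator A (X i) :: real)"
  proof (unfold_locales)
    show "finite {..<N}" by simp
    show "P.indep_vars (\<lambda>_. borel) (\<lambda>i X. indicator A (X i) :: real) {..<N}" by (rule ind)
    show "AE x in P. (indicator A (x i) :: real) \<in> {0..1}" for i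
      by (rule AE_I2) (simp add: indicator_def)
  qed
  have mu: "(\<Sum>i<N. P.expectation (\<lambda>X. indicator A (X i) :: real)) = real N * measure \<nu> A"
    using expc by simp
  have "P.prob {X \<in> space P. real N * t \<le> \<bar>(\<Sum>i<N. indicator A (X i)) - real N * measure \<nu> A\<bar>}
      \<le> 2 * exp (-2 * (real N * t)\<^sup>2 / (\<Sum>i<N. (1 - 0)\<^sup>2))"
    using H.Hoeffding_ineq_abs_ge[of "real N * t"] t N unfolding mu by simp
  also have "(-2 * (real N * t)\<^sup>2 / (\<Sum>i<N. (1 - 0)\<^sup>2)) = -2 * t\<^sup>2 * real N"
    using N by (simp add: power2_eq_square)
  finally show ?thesis unfolding P_def .
qed



lemma pw_bound:
  fixes u v B Z1 Z2 d C hh :: real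
  assumes "Z1 > 0" "Z2 > 0" "B \<ge> 0" "\<bar>u - v\<bar> \<le> d * hh" "0 \<le> v" "v \<le> C * hh"
  shows "\<bar>u * B / Z1 - v * B / Z2\<bar> \<le> (d / Z1 + C * \<bar>Z2 - Z1\<bar> / (Z1 * Z2)) * (hh * B)"
proof -
  have eq: "u * B / Z1 - v * B / Z2 = (u - v) * B / Z1 + v * B * (Z2 - Z1) / (Z1 * Z2)"
    using assms by (simp add: field_simps)
  have 1: "\<bar>(u - v) * B / Z1\<bar> \<le> d * hh * B / Z1"
    using assms by (simp add: abs_mult divide_right_mono mult_right_mono)
  have 2: "\<bar>v * B * (Z2 - Z1) / (Z1 * Z2)\<bar> \<le> C * hh * B * \<bar>Z2 - Z1\<bar> / (Z1 * Z2)"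
  proof -
    have "\<bar>v * B * (Z2 - Z1)\<bar> = v * B * \<bar>Z2 - Z1\<bar>" using assms by (simp add: abs_mult)
    also have "\<dots> \<le> C * hh * B * \<bar>Z2 - Z1\<bar>" using assms by (intro mult_right_mono) auto
    finally show ?thesis using assms by (simp add: abs_mult divide_right_mono)
  qed
  have "\<bar>u * B / Z1 - v * B / Z2\<bar> \<le> d * hh * B / Z1 + C * hh * B * \<bar>Z2 - Z1\<bar> / (Z1 * Z2)"
    unfolding eq using 1 2 by linarith
  also have "\<dots> = (d / Z1 + C * \<bar>Z2 - Z1\<bar> / (Z1 * Z2)) * (hh * B)" by (simp add: field_simps)
  finally show ?thesis .
qed

lemma bayes_bound:
  fixes \<mu> :: "'a measure" and f1 f2 h b :: "'a \<Rightarrow> real" and c C d :: real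
  assumes hb_int: "integrable \<mu> (\<lambda>x. h x * b x)" and Hpos: "(\<integral>x. h x * b x \<partial>\<mu>) > 0"
    and bm: "b \<in> borel_measurable \<mu>" and b0: "\<And>x. 0 \<le> b x"
    and f1m: "f1 \<in> borel_measurable \<mu>" and f2m: "f2 \<in> borel_measurable \<mu>"
    and c: "0 < c" and d: "0 \<le> d" and h0: "\<And>x. 0 \<le> h x" and C0: "0 \<le> C"
    and bnd1: "\<And>x. c * h x \<le> f1 x \<and> f1 x \<le> C * h x"
    and bnd2: "\<And>x. c * h x \<le> f2 x \<and> f2 x \<le> C * h x"
    and dlt: "\<And>x. \<bar>f1 x - f2 x\<bar> \<le> d * h x"
  shows "L1dist \<mu> (Bayes \<mu> f1 b) (Bayes \<mu> f2 b) \<le> d / c + C * d / c\<^sup>2"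
proof -
  define H where "H = (\<integral>x. h x * b x \<partial>\<mu>)"
  define Z1 where "Z1 = (\<integral>x. f1 x * b x \<partial>\<mu>)"
  define Z2 where "Z2 = (\<integral>x. f2 x * b x \<partial>\<mu>)"
  have int_f: "integrable \<mu> (\<lambda>x. f x * b x)" if "\<And>x. c * h x \<le> f x \<and> f x \<le> C * h x" "f \<in> borel_measurable \<mu>" for f
  proof (rule Bochner_Integration.integrable_bound)
    show "integrable \<mu> (\<lambda>x. C * (h x * b x))" using hb_int by simp
    show "(\<lambda>x. f x * b x) \<in> borel_measurable \<mu>" using that bm by measurable
    show "AE x in \<mu>. norm (f x * b x) \<le> norm (C * (h x * b x))"
    proof (rule AE_I2)
      fix x
      have "0 \<le> c * h x" using c h0[of x] by simp
      then have "0 \<le> f x" using that(1)[of x] by linarith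
      then show "norm (f x * b x) \<le> norm (C * (h x * b x))"
      proof -
        have "f x * b x \<le> C * h x * b x" using that(1)[of x] b0[of x] by (intro mult_right_mono) auto
        then show ?thesis using \<open>0 \<le> f x\<close> b0[of x] h0[of x] C0 by (simp add: abs_mult mult.assoc)
      qed
    qed
  qed
  have i1: "integrable \<mu> (\<lambda>x. f1 x * b x)" by (rule int_f[OF bnd1 f1m])
  have i2: "integrable \<mu> (\<lambda>x. f2 x * b x)" by (rule int_f[OF bnd2 f2m])
  have Zlow: "c * H \<le> (\<integral>x. f x * b x \<partial>\<mu>)" if "\<And>x. c * h x \<le> f x \<and> f x \<le> C * h x" "f \<in> borel_measurable \<mu>" for f
  proof -
    have "c * H = (\<integral>x. c * (h x * b x) \<partial>\<mu>)" unfolding H_def by simp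
    also have "\<dots> \<le> (\<integral>x. f x * b x \<partial>\<mu>)"
    proof (rule integral_mono)
      show "integrable \<mu> (\<lambda>x. c * (h x * b x))" using hb_int by simp
      show "integrable \<mu> (\<lambda>x. f x * b x)" by (rule int_f[OF that])
      fix x
      have "c * h x * b x \<le> f x * b x" using that(1)[of x] b0[of x] by (intro mult_right_mono) auto
      then show "c * (h x * b x) \<le> f x * b x" by (simp add: mult.assoc)
    qed
    finally show ?thesis .
  qed
  have Z1: "c * H \<le> Z1" unfolding Z1_def by (rule Zlow[OF bnd1 f1m])
  have Z2: "c * H \<le> Z2" unfolding Z2_def by (rule Zlow[OF bnd2 f2m])
  have Hp: "H > 0" using Hpos H_def by simp
  have cH: "c * H > 0" using Hp c by simp
  have Z1p: "Z1 > 0" and Z2p: "Z2 > 0" using Z1 Z2 cH by linarith+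
  have dZ: "\<bar>Z2 - Z1\<bar> \<le> d * H"
  proof -
    have "Z2 - Z1 = (\<integral>x. f2 x * b x - f1 x * b x \<partial>\<mu>)" unfolding Z1_def Z2_def using i1 i2 by simp
    also have "\<bar>\<dots>\<bar> \<le> (\<integral>x. \<bar>f2 x * b x - f1 x * b x\<bar> \<partial>\<mu>)" by (rule integral_abs_bound)
    also have "\<dots> \<le> (\<integral>x. d * (h x * b x) \<partial>\<mu>)"
    proof (rule integral_mono)
      show "integrable \<mu> (\<lambda>x. \<bar>f2 x * b x - f1 x * b x\<bar>)" using i1 i2 by auto
      show "integrable \<mu> (\<lambda>x. d * (h x * b x))" using hb_int by simp
      fix x
      have "\<bar>f2 x * b x - f1 x * b x\<bar> = \<bar>f1 x - f2 x\<bar> * b x" using b0[of x] by (simp add: abs_mult left_diff_distrib[symmetric] abs_minus_commute)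
      also have "\<dots> \<le> d * h x * b x" using dlt[of x] b0[of x] by (rule mult_right_mono)
      finally show "\<bar>f2 x * b x - f1 x * b x\<bar> \<le> d * (h x * b x)" by simp
    qed
    also have "\<dots> = d * H" unfolding H_def by simp
    finally show ?thesis .
  qed
  define K0 where "K0 = d / Z1 + C * \<bar>Z2 - Z1\<bar> / (Z1 * Z2)"
  have pw: "\<bar>Bayes \<mu> f1 b x - Bayes \<mu> f2 b x\<bar> \<le> K0 * (h x * b x)" for x
    unfolding Bayes_def Z1_def[symmetric] Z2_def[symmetric] K0_def
  proof (rule pw_bound)
    have "0 \<le> c * h x" using c h0[of x] by simp
    then show "0 \<le> f2 x" using bnd2[of x] by linarith
  qed (use Z1p Z2p b0 dlt bnd2[of x] in auto)
  have K0H: "K0 * H \<le> d / c + C * d / c\<^sup>2"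
  proof -
    have a1: "d / Z1 * H \<le> d / c"
    proof -
      have "d / Z1 * H = d * H / Z1" by simp
      also have "\<dots> \<le> d * H / (c * H)" using Z1 cH Z1p d Hp by (intro divide_left_mono) auto
      also have "\<dots> = d / c" using Hp by simp
      finally show ?thesis .
    qed
    have a2: "C * \<bar>Z2 - Z1\<bar> / (Z1 * Z2) * H \<le> C * d / c\<^sup>2"
    proof -
      have "C * \<bar>Z2 - Z1\<bar> / (Z1 * Z2) * H \<le> C * (d * H) * H / (Z1 * Z2)"
        using dZ C0 Hp Z1p Z2p by (simp add: divide_right_mono mult_left_mono mult_right_mono)
      also have "\<dots> \<le> C * (d * H) * H / ((c * H) * (c * H))"
        using Z1 Z2 C0 Hp d c cH Z1p Z2p by (intro divide_left_mono mult_mono) auto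
      also have "\<dots> = C * d / c\<^sup>2" using Hp c by (simp add: power2_eq_square)
      finally show ?thesis .
    qed
    show ?thesis unfolding K0_def using a1 a2 by (simp add: distrib_right)
  qed
  have rhs0: "0 \<le> d / c + C * d / c\<^sup>2" using c d C0 by simp
  show ?thesis
  proof (cases "integrable \<mu> (\<lambda>x. \<bar>Bayes \<mu> f1 b x - Bayes \<mu> f2 b x\<bar>)")
    case True
    have "L1dist \<mu> (Bayes \<mu> f1 b) (Bayes \<mu> f2 b) \<le> (\<integral>x. K0 * (h x * b x) \<partial>\<mu>)"
      unfolding L1dist_def by (rule integral_mono) (use True hb_int pw in auto)
    also have "\<dots> = K0 * H" unfolding H_def by simp
    finally show ?thesis using K0H by simp
  next
    case False
    then show ?thesis unfolding L1dist_def using rhs0 by (simp add: not_integrable_integral_eq)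
  qed
qed


lemma dens_prob:
  assumes "is_density \<mu> g"
  shows "prob_space (density \<mu> g)"
proof (rule prob_spaceI)
  have gm: "g \<in> borel_measurable \<mu>" and g0: "\<And>x. 0 \<le> g x" and gi: "integrable \<mu> g" and g1: "(\<integral>x. g x \<partial>\<mu>) = 1"
    using assms unfolding is_density_def by auto
  have "emeasure (density \<mu> g) (space (density \<mu> g)) = (\<integral>\<^sup>+ x. ennreal (g x) * indicator (space \<mu>) x \<partial>\<mu>)"
    using gm by (simp add: emeasure_density)
  also have "\<dots> = (\<integral>\<^sup>+ x. ennreal (g x) \<partial>\<mu>)" by (intro nn_integral_cong) simp
  also have "\<dots> = ennreal (\<integral>x. g x \<partial>\<mu>)" using gi g0 by (intro nn_integral_eq_integral) auto
  finally show "emeasure (density \<mu> g) (space (density \<mu> g)) = 1" using g1 by simp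
qed

theorem lemma11:
  fixes \<mu> :: "'a::metric_space measure"
    and a :: "'a \<Rightarrow> 'a \<Rightarrow> real"
    and h :: "'a \<Rightarrow> real"
    and c_a C_a \<epsilon> :: real
  assumes compact: "compact (UNIV :: 'a set)"
    and mu_borel: "sets \<mu> = sets borel"
    and mu_sf: "sigma_finite_measure \<mu>"
    and a_meas: "(\<lambda>(x, y). a x y) \<in> borel_measurable (\<mu> \<Otimes>\<^sub>M \<mu>)"
    and a_trans: "\<And>x. is_density \<mu> (a x)"
    and h_dens: "is_density \<mu> h"
    and const_pos: "0 < c_a" "c_a \<le> C_a"
    and a_bounds: "\<And>x x'. c_a * h x \<le> a x' x \<and> a x' x \<le> C_a * h x"
    and Delta: "\<forall>e>0. \<exists>\<delta>>0. \<forall>x x'. dist x x' < \<delta> \<longrightarrow>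
                  (\<forall>x''. \<bar>a x x'' - a x' x''\<bar> / h x'' \<le> e)"
    and eps: "\<epsilon> > 0"
  shows "\<exists>K r. r > 0 \<and>
     (\<forall>g b N. is_density \<mu> g \<longrightarrow> b \<in> borel_measurable \<mu> \<longrightarrow> (\<forall>x. 0 \<le> b x) \<longrightarrow>
        integrable \<mu> (\<lambda>x. h x * b x) \<longrightarrow> (\<integral>x. h x * b x \<partial>\<mu>) > 0 \<longrightarrow> N > 0 \<longrightarrow>
        (\<exists>E \<in> sets (PiM {..<N} (\<lambda>_. density \<mu> g)).
           {X \<in> space (PiM {..<N} (\<lambda>_. density \<mu> g)).
              L1dist \<mu> (Bayes \<mu> (Astar_emp a N X) b) (Bayes \<mu> (Astar \<mu> a g) b) > \<epsilon>} \<subseteq> E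
           \<and> measure (PiM {..<N} (\<lambda>_. density \<mu> g)) E \<le> K * exp (- r * real N)))"
proof -
  have h0: "0 \<le> h x" for x using h_dens unfolding is_density_def by auto
  have Cpos: "0 < C_a" using const_pos by linarith
  have a0: "0 \<le> a x' x" for x x' using a_bounds[of x x'] h0[of x] const_pos
    by (meson mult_nonneg_nonneg less_imp_le order_trans)
  have am1: "a x' \<in> borel_measurable \<mu>" for x' using a_trans[of x'] unfolding is_density_def by auto
  have am2: "(\<lambda>x'. a x' x) \<in> borel_measurable \<mu>" for x
  proof -
    have "(\<lambda>x'. (x', x)) \<in> measurable \<mu> (\<mu> \<Otimes>\<^sub>M \<mu>)"
      by (rule measurable_Pair) (auto simp: mu_borel measurable_const sets_eq_imp_space_eq[OF mu_borel])
    from measurable_comp[OF this a_meas] show ?thesis by (simp add: comp_def)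
  qed
  define e where "e = \<epsilon> * c_a\<^sup>2 / (3 * (c_a + C_a))"
  have e: "e > 0" unfolding e_def using eps const_pos by (intro divide_pos_pos mult_pos_pos) auto
  obtain \<delta> where \<delta>: "\<delta> > 0" "\<forall>x x'. dist x x' < \<delta> \<longrightarrow> (\<forall>x''. \<bar>a x x'' - a x' x''\<bar> / h x'' \<le> e)"
    using Delta e by blast
  obtain m :: nat and y :: "nat \<Rightarrow> 'a" and C where m: "0 < m" and Cb: "\<forall>j<m. C j \<in> sets borel"
    and Cu: "\<forall>x. \<exists>!j. j < m \<and> x \<in> C j" and Cd: "\<forall>j<m. \<forall>x\<in>C j. dist (y j) x < \<delta>"
    using partition_exists[OF compact \<delta>(1)] by blast
  define t where "t = e / (C_a * real m)"
  have t: "t > 0" unfolding t_def using e Cpos m by simp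
  have close: "\<bar>a x' x - (\<Sum>j<m. a (y j) x * indicator (C j) x')\<bar> \<le> e * h x" for x x'
  proof -
    obtain j0 where j0: "j0 < m" "x' \<in> C j0" using Cu by blast
    have uq: "j = j0" if "j < m" "x' \<in> C j" for j using Cu j0 that by blast
    have "(\<Sum>j<m. a (y j) x * indicator (C j) x') = (\<Sum>j<m. if j = j0 then a (y j) x else 0)"
      by (rule sum.cong) (auto simp: indicator_def j0 dest: uq)
    also have "\<dots> = a (y j0) x" using j0 by simp
    finally have s: "(\<Sum>j<m. a (y j) x * indicator (C j) x') = a (y j0) x" .
    have dd: "\<bar>a (y j0) x - a x' x\<bar> / h x \<le> e" using \<delta>(2) Cd j0 by blast
    show ?thesis
    proof (cases "h x = 0")
      case True
      then have "a x' x = 0" "a (y j0) x = 0" using a_bounds[of x x'] a_bounds[of x "y j0"] by auto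
      then show ?thesis using s True by simp
    next
      case False
      then have hp: "h x > 0" using h0[of x] by simp
      have "\<bar>a (y j0) x - a x' x\<bar> \<le> e * h x" using dd hp by (simp add: divide_le_eq)
      then show ?thesis using s by simp
    qed
  qed
  have main: "\<forall>g b N. is_density \<mu> g \<longrightarrow> b \<in> borel_measurable \<mu> \<longrightarrow> (\<forall>x. 0 \<le> b x) \<longrightarrow>
        integrable \<mu> (\<lambda>x. h x * b x) \<longrightarrow> (\<integral>x. h x * b x \<partial>\<mu>) > 0 \<longrightarrow> N > 0 \<longrightarrow>
        (\<exists>E \<in> sets (PiM {..<N} (\<lambda>_. density \<mu> g)).
           {X \<in> space (PiM {..<N} (\<lambda>_. density \<mu> g)).
              L1dist \<mu> (Bayes \<mu> (Astar_emp a N X) b) (Bayes \<mu> (Astar \<mu> a g) b) > \<epsilon>} \<subseteq> E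
           \<and> measure (PiM {..<N} (\<lambda>_. density \<mu> g)) E \<le> 2 * real m * exp (- (2 * t\<^sup>2) * real N))"
  proof (intro allI impI)
    fix g b and N :: nat
    assume g: "is_density \<mu> g" and bm: "b \<in> borel_measurable \<mu>" and b0: "\<forall>x. 0 \<le> b x"
      and hbi: "integrable \<mu> (\<lambda>x. h x * b x)" and Hpos: "(\<integral>x. h x * b x \<partial>\<mu>) > 0" and N: "N > 0"
    have gm: "g \<in> borel_measurable \<mu>" and g0: "\<And>x. 0 \<le> g x" and gi: "integrable \<mu> g"
      using g unfolding is_density_def by auto
    define \<nu> where "\<nu> = density \<mu> g"
    interpret nu: prob_space \<nu> unfolding \<nu>_def by (rule dens_prob[OF g])
    have snu: "sets \<nu> = sets borel" unfolding \<nu>_def using mu_borel by simp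
    have Cnu: "C j \<in> sets \<nu>" if "j < m" for j using Cb that snu by simp
    define P where "P = PiM {..<N} (\<lambda>_. \<nu>)"
    define Ej where "Ej = (\<lambda>j. {X \<in> space P. real N * t \<le> \<bar>(\<Sum>i<N. indicator (C j) (X i)) - real N * measure \<nu> (C j)\<bar>})"
    define E where "E = (\<Union>j<m. Ej j)"
    have Ejm: "Ej j \<in> sets P" if "j < m" for j
    proof -
      have [measurable]: "C j \<in> sets \<nu>" by (rule Cnu[OF that])
      show ?thesis unfolding Ej_def P_def by measurable
    qed
    have "E \<in> sets P" unfolding E_def using Ejm by auto
    moreover have "measure P E \<le> 2 * real m * exp (- (2 * t\<^sup>2) * real N)"
    proof -
      have "measure P E \<le> (\<Sum>j<m. measure P (Ej j))" unfolding E_def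
        by (rule measure_UNION_le) (use Ejm in auto)
      also have "\<dots> \<le> (\<Sum>j<m. 2 * exp (-2 * t\<^sup>2 * real N))"
      proof (rule sum_mono)
        fix j assume "j \<in> {..<m}"
        then show "measure P (Ej j) \<le> 2 * exp (-2 * t\<^sup>2 * real N)"
          unfolding Ej_def P_def using coord_hoeffding[OF nu.prob_space_axioms Cnu N] t by simp
      qed
      also have "\<dots> = 2 * real m * exp (- (2 * t\<^sup>2) * real N)" by simp
      finally show ?thesis .
    qed
    moreover have "{X \<in> space P. L1dist \<mu> (Bayes \<mu> (Astar_emp a N X) b) (Bayes \<mu> (Astar \<mu> a g) b) > \<epsilon>} \<subseteq> E"
    proof
      fix X assume X: "X \<in> {X \<in> space P. L1dist \<mu> (Bayes \<mu> (Astar_emp a N X) b) (Bayes \<mu> (Astar \<mu> a g) b) > \<epsilon>}"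
      show "X \<in> E"
      proof (rule ccontr)
        assume "X \<notin> E"
        then have "X \<notin> Ej j" if "j < m" for j using that unfolding E_def by auto
        then have hyp: "\<bar>(\<Sum>i<N. indicator (C j) (X i)) - real N * measure \<nu> (C j)\<bar> < real N * t" if "j < m" for j
          using X that unfolding Ej_def by (auto simp: not_le)
        have "L1dist \<mu> (Bayes \<mu> (Astar_emp a N X) b) (Bayes \<mu> (Astar \<mu> a g) b) \<le> \<epsilon>"
        proof -
        define f1 where "f1 = Astar_emp a N X"
        define f2 where "f2 = Astar \<mu> a g"
        have [measurable]: "a x' \<in> borel_measurable \<mu>" for x' by (rule am1)
        have f1m: "f1 \<in> borel_measurable \<mu>" unfolding f1_def Astar_emp_def[abs_def] by measurable
        have f2m: "f2 \<in> borel_measurable \<mu>"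
        proof -
          have sw: "(\<lambda>p. (snd p, fst p)) \<in> measurable (\<mu> \<Otimes>\<^sub>M \<mu>) (\<mu> \<Otimes>\<^sub>M \<mu>)"
            by (intro measurable_Pair measurable_fst measurable_snd)
          have A2: "(\<lambda>p. a (snd p) (fst p)) \<in> borel_measurable (\<mu> \<Otimes>\<^sub>M \<mu>)"
            using measurable_comp[OF sw a_meas] by (simp add: comp_def case_prod_beta)
          have G2: "(\<lambda>p. g (snd p)) \<in> borel_measurable (\<mu> \<Otimes>\<^sub>M \<mu>)"
            using measurable_comp[OF measurable_snd gm] by (simp add: comp_def)
          have "case_prod (\<lambda>x x'. g x' * a x' x) \<in> borel_measurable (\<mu> \<Otimes>\<^sub>M \<mu>)"
            unfolding case_prod_unfold using borel_measurable_times[OF G2 A2] by simp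
          from sigma_finite_measure.borel_measurable_lebesgue_integral[OF mu_sf this]
          show ?thesis unfolding f2_def Astar_def[abs_def] .
        qed
        have am2nu: "(\<lambda>x'. a x' x) \<in> borel_measurable \<nu>" for x
          using am2[of x] unfolding \<nu>_def by simp
        have aint: "integrable \<nu> (\<lambda>x'. a x' x)" for x
          by (rule nu.integrable_const_bound[where B="C_a * h x"]) (use a_bounds a0 am2nu in auto)
        have f2eq: "f2 x = (\<integral>x'. a x' x \<partial>\<nu>)" for x
          unfolding f2_def Astar_def \<nu>_def using integral_density[OF am2[of x] gm] g0 by simp
        have intc: "(\<integral>x'. c \<partial>\<nu>) = c" for c :: real by (simp add: nu.prob_space)
        have bnd2: "c_a * h x \<le> f2 x \<and> f2 x \<le> C_a * h x" for x
        proof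
          have "c_a * h x = (\<integral>x'. c_a * h x \<partial>\<nu>)" by (simp add: nu.prob_space)
          also have "\<dots> \<le> f2 x" unfolding f2eq by (rule integral_mono) (use aint a_bounds in auto)
          finally show "c_a * h x \<le> f2 x" .
          have "f2 x \<le> (\<integral>x'. C_a * h x \<partial>\<nu>)" unfolding f2eq by (rule integral_mono) (use aint a_bounds in auto)
          then show "f2 x \<le> C_a * h x" by (simp add: nu.prob_space)
        qed
        have f1eq: "f1 x = (\<Sum>i<N. a (X i) x) / real N" for x unfolding f1_def Astar_emp_def by simp
        have bnd1: "c_a * h x \<le> f1 x \<and> f1 x \<le> C_a * h x" for x
        proof -
          have "(\<Sum>i<N. c_a * h x) \<le> (\<Sum>i<N. a (X i) x)" by (rule sum_mono) (use a_bounds in auto)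
          moreover have "(\<Sum>i<N. a (X i) x) \<le> (\<Sum>i<N. C_a * h x)" by (rule sum_mono) (use a_bounds in auto)
          ultimately show ?thesis unfolding f1eq using N by (simp add: le_divide_eq divide_le_eq mult.commute)
        qed
        have dlt: "\<bar>f1 x - f2 x\<bar> \<le> (3 * e) * h x" for x
        proof -
          define \<psi> where "\<psi> = (\<lambda>x'. \<Sum>j<m. a (y j) x * indicator (C j) x')"
          define S where "S = (\<Sum>j<m. a (y j) x * ((\<Sum>i<N. indicator (C j) (X i)) / real N))"
          define T where "T = (\<Sum>j<m. a (y j) x * measure \<nu> (C j))"
          have s1: "\<bar>f1 x - S\<bar> \<le> e * h x"
          proof -
            have "(\<Sum>i<N. \<psi> (X i)) = (\<Sum>j<m. a (y j) x * (\<Sum>i<N. indicator (C j) (X i)))"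
              unfolding \<psi>_def by (subst sum.swap) (simp only: sum_distrib_left)
            moreover have "S = (\<Sum>j<m. a (y j) x * (\<Sum>i<N. indicator (C j) (X i)) / real N)"
              unfolding S_def by (simp only: times_divide_eq_right)
            moreover have "\<dots> = (\<Sum>j<m. a (y j) x * (\<Sum>i<N. indicator (C j) (X i))) / real N"
              by (rule sum_divide_distrib[symmetric])
            ultimately have "S = (\<Sum>i<N. \<psi> (X i)) / real N" by simp
            then have "f1 x - S = (\<Sum>i<N. a (X i) x - \<psi> (X i)) / real N"
              unfolding f1eq by (simp add: sum_subtractf diff_divide_distrib)
            moreover have "\<bar>\<Sum>i<N. a (X i) x - \<psi> (X i)\<bar> \<le> real N * (e * h x)"
            proof -
              have "\<bar>\<Sum>i<N. a (X i) x - \<psi> (X i)\<bar> \<le> (\<Sum>i<N. \<bar>a (X i) x - \<psi> (X i)\<bar>)" by (rule sum_abs)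
              also have "\<dots> \<le> (\<Sum>i<N. e * h x)" by (rule sum_mono) (use close in \<open>simp add: \<psi>_def\<close>)
              finally show ?thesis by simp
            qed
            ultimately show ?thesis using N by (simp add: divide_le_eq mult.commute)
          qed
          have psint: "integrable \<nu> \<psi>" unfolding \<psi>_def
            by (intro Bochner_Integration.integrable_sum Bochner_Integration.integrable_mult_right integrable_real_indicator) (use Cnu in \<open>auto simp: nu.emeasure_finite less_top[symmetric]\<close>)
          have s2: "\<bar>f2 x - T\<bar> \<le> e * h x"
          proof -
            have sp: "space \<nu> = UNIV" using snu sets_eq_imp_space_eq by fastforce
            have "(\<integral>x'. \<psi> x' \<partial>\<nu>) = T" unfolding \<psi>_def T_def
              by (subst Bochner_Integration.integral_sum) (use Cnu sp in \<open>auto simp: nu.emeasure_finite less_top[symmetric]\<close>)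
            then have "f2 x - T = (\<integral>x'. a x' x - \<psi> x' \<partial>\<nu>)" unfolding f2eq using aint psint by simp
            also have "\<bar>\<dots>\<bar> \<le> (\<integral>x'. \<bar>a x' x - \<psi> x'\<bar> \<partial>\<nu>)" by (rule integral_abs_bound)
            also have "\<dots> \<le> (\<integral>x'. e * h x \<partial>\<nu>)"
              by (rule integral_mono) (use aint psint close in \<open>auto simp: \<psi>_def\<close>)
            also have "\<dots> = e * h x" by (rule intc)
            finally show ?thesis .
          qed
          have s3: "\<bar>S - T\<bar> \<le> e * h x"
          proof -
            have "S - T = (\<Sum>j<m. a (y j) x * ((\<Sum>i<N. indicator (C j) (X i)) / real N - measure \<nu> (C j)))"
              unfolding S_def T_def by (simp add: sum_subtractf right_diff_distrib)
            also have "\<bar>\<dots>\<bar> \<le> (\<Sum>j<m. \<bar>a (y j) x * ((\<Sum>i<N. indicator (C j) (X i)) / real N - measure \<nu> (C j))\<bar>)"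
              by (rule sum_abs)
            also have "\<dots> \<le> (\<Sum>j<m. C_a * h x * t)"
            proof (rule sum_mono)
              fix j assume j: "j \<in> {..<m}"
              have "\<bar>(\<Sum>i<N. indicator (C j) (X i)) / real N - measure \<nu> (C j)\<bar>
                  = \<bar>(\<Sum>i<N. indicator (C j) (X i)) - real N * measure \<nu> (C j)\<bar> / real N"
                using N by (simp add: field_simps)
              also have "\<dots> \<le> t" using hyp[of j] j N by (simp add: divide_le_eq mult.commute)
              finally have pj: "\<bar>(\<Sum>i<N. indicator (C j) (X i)) / real N - measure \<nu> (C j)\<bar> \<le> t" .
              have "\<bar>a (y j) x * ((\<Sum>i<N. indicator (C j) (X i)) / real N - measure \<nu> (C j))\<bar>
                  = a (y j) x * \<bar>(\<Sum>i<N. indicator (C j) (X i)) / real N - measure \<nu> (C j)\<bar>"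
                using a0 by (simp add: abs_mult)
              also have "\<dots> \<le> C_a * h x * t"
                by (rule mult_mono) (use pj a_bounds a0 t h0 Cpos in auto)
              finally show "\<bar>a (y j) x * ((\<Sum>i<N. indicator (C j) (X i)) / real N - measure \<nu> (C j))\<bar> \<le> C_a * h x * t" .
            qed
            also have "\<dots> = e * h x" unfolding t_def using m Cpos by simp
            finally show ?thesis .
          qed
          show ?thesis using s1 s2 s3 by linarith
        qed
        have "L1dist \<mu> (Bayes \<mu> f1 b) (Bayes \<mu> f2 b) \<le> 3 * e / c_a + C_a * (3 * e) / c_a\<^sup>2"
          by (rule bayes_bound[OF hbi Hpos bm _ f1m f2m const_pos(1) _ h0 _ bnd1 bnd2 dlt])
             (use b0 e Cpos in auto)
        also have "3 * e / c_a + C_a * (3 * e) / c_a\<^sup>2 = \<epsilon>"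
        proof -
          have cc: "c_a + C_a > 0" "c_a \<noteq> 0" using const_pos Cpos by auto
          have e3: "3 * e = \<epsilon> * c_a\<^sup>2 / (c_a + C_a)" unfolding e_def using cc by (simp add: field_simps)
          have "3 * e / c_a + C_a * (3 * e) / c_a\<^sup>2 = (3 * e) * (c_a + C_a) / c_a\<^sup>2"
            using cc by (simp add: field_simps power2_eq_square)
          also have "\<dots> = \<epsilon>"
          proof -
            have q: "c_a + C_a \<noteq> 0" and c2: "c_a\<^sup>2 \<noteq> 0" using cc by auto
            have "\<epsilon> * c_a\<^sup>2 / (c_a + C_a) * (c_a + C_a) = \<epsilon> * c_a\<^sup>2" using q by simp
            then show ?thesis unfolding e3 using c2 by simp
          qed
          finally show ?thesis .
        qed
        finally show "L1dist \<mu> (Bayes \<mu> (Astar_emp a N X) b) (Bayes \<mu> (Astar \<mu> a g) b) \<le> \<epsilon>"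
          unfolding f1_def f2_def .
        qed
        then show False using X by simp
      qed
    qed
    ultimately show "\<exists>E \<in> sets (PiM {..<N} (\<lambda>_. density \<mu> g)).
           {X \<in> space (PiM {..<N} (\<lambda>_. density \<mu> g)).
              L1dist \<mu> (Bayes \<mu> (Astar_emp a N X) b) (Bayes \<mu> (Astar \<mu> a g) b) > \<epsilon>} \<subseteq> E
           \<and> measure (PiM {..<N} (\<lambda>_. density \<mu> g)) E \<le> 2 * real m * exp (- (2 * t\<^sup>2) * real N)"
      unfolding P_def \<nu>_def by blast
  qed
  have "0 < 2 * t\<^sup>2" using t by simp
  with main show ?thesis by blast
qed

end
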